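(* Let $(X,d)$ be an $F$-space with non-decreasing metric $d$ and let $\{A_n\}$ be an approximation scheme on $X$. Suppose there exist an infinite set $\mathbb{N}_0\subseteq\mathbb{N}$, a bounded subset $\{x_n\}_{n\in\mathbb{N}_0}$ of $X$ and $c>0$ such that $c\le E(x_n,A_n)$ for all $n\in\mathbb{N}_0$. Then $\{A_n\}$ satisfies Shapiro's theorem on $X$.
   Context: An $F$-space is a complete metric vector space with translation-invariant metric $d$; $d$ is non-decreasing if $d(\alpha x,0)\le d(x,0)$ for $0\le\alpha\le1$. A subset $A\subseteq X$ is bounded (in the topological vector space sense) if for every $r>0$ there exists $\lambda>0$ with $A\subseteq\lambda B(0,r)$, where $B(0,r)=\{y:d(y,0)\le r\}$. An approximation scheme on $X$ is a chain $A_0\subsetneq A_1\subsetneq\cdots\subsetneq X$ of subsets with: (A1) there is $K:\mathbb{N}\to\mathbb{N}$, $K(n)\ge n$, $A_n+A_n\subseteq A_{K(n)}$; (A2) $\lambda A_n\subseteq A_n$ for all scalars $\lambda$; (A3) $\bigcup_nA_n$ dense in $X$. $E(x,A)=\inf_{a\in A}d(x,a)$. $\{A_n\}$ satisfies Shapiro's theorem on $X$ if for every non-increasing sequence $\{\varepsilon_n\}$ of nonnegative reals tending to $0$ there exists $x\in X$ with $E(x,A_n)\neq\mathbf{O}(\varepsilon_n)$. *)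

theory Defs
  imports "HOL-Analysis.Analysis" "HOL-Library.Landau_Symbols"
begin

text \<open>Metrics on a real vector space, given as an explicit function d (not the
 norm-induced dist of the type class).\<close>

definition is_metric :: "('a \<Rightarrow> 'a \<Rightarrow> real) \<Rightarrow> bool" where
  "is_metric d \<longleftrightarrow>
     (\<forall>x y. 0 \<le> d x y) \<and> (\<forall>x y. d x y = 0 \<longleftrightarrow> x = y) \<and>
     (\<forall>x y. d x y = d y x) \<and> (\<forall>x y z. d x z \<le> d x y + d y z)"

definition d_converges :: "('a \<Rightarrow> 'a \<Rightarrow> real) \<Rightarrow> (nat \<Rightarrow> 'a) \<Rightarrow> 'a \<Rightarrow> bool" where
  "d_converges d s l \<longleftrightarrow> (\<lambda>n. d (s n) l) \<longlonglongrightarrow> 0"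

definition d_Cauchy :: "('a \<Rightarrow> 'a \<Rightarrow> real) \<Rightarrow> (nat \<Rightarrow> 'a) \<Rightarrow> bool" where
  "d_Cauchy d s \<longleftrightarrow> (\<forall>e>0. \<exists>N. \<forall>m\<ge>N. \<forall>n\<ge>N. d (s m) (s n) < e)"

text \<open>F-space: complete metric (real) vector space with translation-invariant metric,
 whose vector operations are continuous (addition is automatically continuous by
 translation invariance; scalar multiplication is required to be jointly continuous).\<close>

definition F_space :: "('a::real_vector \<Rightarrow> 'a \<Rightarrow> real) \<Rightarrow> bool" where
  "F_space d \<longleftrightarrow>
     is_metric d \<and>
     (\<forall>x y z. d (x + z) (y + z) = d x y) \<and>
     (\<forall>s. d_Cauchy d s \<longrightarrow> (\<exists>l. d_converges d s l)) \<and>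
     (\<forall>(a::nat \<Rightarrow> real) c s l. a \<longlonglongrightarrow> c \<longrightarrow> d_converges d s l \<longrightarrow>
         d_converges d (\<lambda>n. a n *\<^sub>R s n) (c *\<^sub>R l))"

definition nondecreasing_metric :: "('a::real_vector \<Rightarrow> 'a \<Rightarrow> real) \<Rightarrow> bool" where
  "nondecreasing_metric d \<longleftrightarrow> (\<forall>x (\<alpha>::real). 0 \<le> \<alpha> \<and> \<alpha> \<le> 1 \<longrightarrow> d (\<alpha> *\<^sub>R x) 0 \<le> d x 0)"

definition d_ball0 :: "('a::real_vector \<Rightarrow> 'a \<Rightarrow> real) \<Rightarrow> real \<Rightarrow> 'a set" where
  "d_ball0 d r = {y. d y 0 \<le> r}"

text \<open>Bounded in the topological vector space sense.\<close>
definition tvs_bounded :: "('a::real_vector \<Rightarrow> 'a \<Rightarrow> real) \<Rightarrow> 'a set \<Rightarrow> bool" where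
  "tvs_bounded d A \<longleftrightarrow> (\<forall>r>0. \<exists>t>0. A \<subseteq> (\<lambda>y. t *\<^sub>R y) ` d_ball0 d r)"

definition approximation_scheme ::
  "('a::real_vector \<Rightarrow> 'a \<Rightarrow> real) \<Rightarrow> (nat \<Rightarrow> 'a set) \<Rightarrow> bool" where
  "approximation_scheme d A \<longleftrightarrow>
     (\<forall>n. A n \<subset> A (Suc n)) \<and> (\<forall>n. A n \<noteq> UNIV) \<and>
     (\<exists>K::nat \<Rightarrow> nat. \<forall>n. K n \<ge> n \<and> {a + b | a b. a \<in> A n \<and> b \<in> A n} \<subseteq> A (K n)) \<and>
     (\<forall>n (t::real). \<forall>a\<in>A n. t *\<^sub>R a \<in> A n) \<and>
     (\<forall>x. \<forall>e>0. \<exists>n. \<exists>a\<in>A n. d x a < e)"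

definition best_approx_error :: "('a \<Rightarrow> 'a \<Rightarrow> real) \<Rightarrow> 'a \<Rightarrow> 'a set \<Rightarrow> real" where
  "best_approx_error d x A = (INF a\<in>A. d x a)"

definition satisfies_Shapiro :: "('a::real_vector \<Rightarrow> 'a \<Rightarrow> real) \<Rightarrow> (nat \<Rightarrow> 'a set) \<Rightarrow> bool" where
  "satisfies_Shapiro d A \<longleftrightarrow>
     (\<forall>\<epsilon>::nat \<Rightarrow> real. decseq \<epsilon> \<longrightarrow> (\<forall>n. 0 \<le> \<epsilon> n) \<longrightarrow> \<epsilon> \<longlonglongrightarrow> 0 \<longrightarrow>
        (\<exists>x. (\<lambda>n. best_approx_error d x (A n)) \<notin> O(\<epsilon>)))"

end

theory Submission
  imports Defs
begin

lemma md_tri: "is_metric d \<Longrightarrow> d x z \<le> d x y + d y z" by (simp add: is_metric_def)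
lemma md_sym: "is_metric d \<Longrightarrow> d x y = d y x" by (simp add: is_metric_def)
lemma md_zero: "is_metric d \<Longrightarrow> d x x = 0" by (simp add: is_metric_def)
lemma md_nonneg: "is_metric d \<Longrightarrow> 0 \<le> d x y" by (simp add: is_metric_def)

lemma d_shift: "\<forall>x y z. d (x + z) (y + z) = d x y \<Longrightarrow> p' = p + q \<Longrightarrow> r' = r + q \<Longrightarrow> d p' r' = d (p::'a::real_vector) r"
  by simp

lemma E_le:
  assumes "is_metric d" "a \<in> B"
  shows "best_approx_error d x B \<le> d x a"
  unfolding best_approx_error_def
  by (rule cINF_lower, unfold bdd_below_def, use assms in \<open>auto simp: is_metric_def\<close>)

lemma E_ge:
  assumes "B \<noteq> {}" "\<And>a. a \<in> B \<Longrightarrow> c \<le> d x a"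
  shows "c \<le> best_approx_error d x B"
  unfolding best_approx_error_def by (rule cINF_greatest, use assms in auto)

lemma E_nonneg:
  assumes "is_metric d" "B \<noteq> {}"
  shows "0 \<le> best_approx_error d x B"
  by (rule E_ge, use assms in \<open>auto simp: is_metric_def\<close>)

lemma E_lip:
  assumes "is_metric d" "B \<noteq> {}"
  shows "best_approx_error d y B \<le> d y z + best_approx_error d z B"
proof -
  have "best_approx_error d y B - d y z \<le> best_approx_error d z B"
  proof (rule E_ge[OF assms(2)])
    fix a assume "a \<in> B"
    have "best_approx_error d y B \<le> d y a" by (rule E_le[OF assms(1) \<open>a\<in>B\<close>])
    also have "\<dots> \<le> d y z + d z a" by (rule md_tri[OF assms(1)])
    finally show "best_approx_error d y B - d y z \<le> d z a" by simp
  qed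
  then show ?thesis by simp
qed

lemma E_mono:
  assumes "is_metric d" "B \<noteq> {}" "B \<subseteq> B'"
  shows "best_approx_error d x B' \<le> best_approx_error d x B"
  by (rule E_ge[OF assms(2)], rule E_le, use assms in auto)

lemma d_add_le:
  assumes "is_metric d" "\<forall>x y z. d (x + z) (y + z) = d x y"
  shows "d (u + v) (a + b) \<le> d u a + d (v::'a::real_vector) b"
proof -
  have "d (u + v) (a + b) \<le> d (u + v) (a + v) + d (a + v) (a + b)"
    by (rule md_tri[OF assms(1)])
  moreover have "d (a + v) (a + b) = d v b"
    using assms(2) by (metis add.commute)
  ultimately show ?thesis using assms(2) by simp
qed

lemma E_add:
  assumes "is_metric d" "\<forall>x y z. d (x + z) (y + z) = d x y" "B \<noteq> {}"
    "\<And>a b. a \<in> B \<Longrightarrow> b \<in> B \<Longrightarrow> a + b \<in> B2"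
  shows "best_approx_error d (u + v) B2 \<le> best_approx_error d (u::'a::real_vector) B + best_approx_error d v B"
proof -
  have "best_approx_error d (u + v) B2 - best_approx_error d u B \<le> best_approx_error d v B"
  proof (rule E_ge[OF assms(3)])
    fix b assume b: "b \<in> B"
    have "best_approx_error d (u + v) B2 - d v b \<le> best_approx_error d u B"
    proof (rule E_ge[OF assms(3)])
      fix a assume a: "a \<in> B"
      have "best_approx_error d (u + v) B2 \<le> d (u+v) (a+b)" by (rule E_le[OF assms(1) assms(4)[OF a b]])
      also have "\<dots> \<le> d u a + d v b" by (rule d_add_le[OF assms(1,2)])
      finally show "best_approx_error d (u + v) B2 - d v b \<le> d u a" by simp
    qed
    then show "best_approx_error d (u + v) B2 - best_approx_error d u B \<le> d v b" by simp
  qed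
  then show ?thesis by simp
qed

lemma E_neg:
  assumes "is_metric d" "\<forall>x y z. d (x + z) (y + z) = d x y" "B \<noteq> {}"
    "\<And>a. a \<in> B \<Longrightarrow> - a \<in> B"
  shows "best_approx_error d (- x) B \<le> best_approx_error d (x::'a::real_vector) B"
proof (rule E_ge[OF assms(3)])
  fix a assume a: "a \<in> B"
  have "best_approx_error d (- x) B \<le> d (-x) (-a)" by (rule E_le[OF assms(1) assms(4)[OF a]])
  also have "d (-x) (-a) = d a x" by (rule d_shift[OF assms(2), where q="-x-a"]; simp add: algebra_simps)
  also have "\<dots> = d x a" by (rule md_sym[OF assms(1)])
  finally show "best_approx_error d (- x) B \<le> d x a" .
qed

lemma d_nat_scale:
  assumes "is_metric d" "\<forall>x y z. d (x + z) (y + z) = d x y"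
  shows "d (real m *\<^sub>R z) 0 \<le> real m * d (z::'a::real_vector) 0"
proof (induction m)
  case 0
  then show ?case using md_zero[OF assms(1)] md_tri[OF assms(1)] by simp
next
  case (Suc m)
  have "d (real (Suc m) *\<^sub>R z) 0 \<le> d (real (Suc m) *\<^sub>R z) z + d z 0"
    using md_zero[OF assms(1)] md_tri[OF assms(1)] by simp
  moreover have "d (real (Suc m) *\<^sub>R z) z = d (real m *\<^sub>R z) 0"
    by (rule d_shift[OF assms(2), where q="z"]; simp add: algebra_simps)
  ultimately show ?case using Suc by (simp add: algebra_simps)
qed

lemma d_scale:
  assumes "is_metric d" "\<forall>x y z. d (x + z) (y + z) = d x y" "nondecreasing_metric d"
    "0 \<le> t" "t \<le> real m"
  shows "d (t *\<^sub>R z) 0 \<le> real m * d (z::'a::real_vector) 0"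
proof (cases "m = 0")
  case True
  then have "t = 0" using assms by simp
  then show ?thesis using md_zero[OF assms(1)] True by simp
next
  case False
  have eq: "t *\<^sub>R z = (t / real m) *\<^sub>R (real m *\<^sub>R z)" using False by simp
  have "0 \<le> t / real m" "t / real m \<le> 1" using assms(4,5) False by (auto simp: divide_simps)
  then have "d ((t / real m) *\<^sub>R (real m *\<^sub>R z)) 0 \<le> d (real m *\<^sub>R z) 0"
    using assms(3) unfolding nondecreasing_metric_def by blast
  then have "d (t *\<^sub>R z) 0 \<le> d (real m *\<^sub>R z) 0" by (simp only: eq)
  also have "\<dots> \<le> real m * d z 0" by (rule d_nat_scale[OF assms(1,2)])
  finally show ?thesis .
qed

lemma E_scale:
  assumes "is_metric d" "\<forall>x y z. d (x + z) (y + z) = d x y" "nondecreasing_metric d"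
    "0 \<le> t" "t \<le> real m" "B \<noteq> {}" "\<And>a s. a \<in> B \<Longrightarrow> s *\<^sub>R a \<in> B"
  shows "best_approx_error d (t *\<^sub>R y) B \<le> real m * best_approx_error d (y::'a::real_vector) B"
proof (cases "m = 0")
  case True
  then have t: "t = 0" using assms by simp
  obtain a where a: "a \<in> B" using assms(6) by blast
  have "best_approx_error d (t *\<^sub>R y) B \<le> d 0 0" using E_le[OF assms(1) assms(7)[OF a, of 0]] t by simp
  then show ?thesis using md_zero[OF assms(1)] True by simp
next
  case False
  have "best_approx_error d (t *\<^sub>R y) B / real m \<le> best_approx_error d y B"
  proof (rule E_ge[OF assms(6)])
    fix a assume a: "a \<in> B"
    have "best_approx_error d (t *\<^sub>R y) B \<le> d (t *\<^sub>R y) (t *\<^sub>R a)" by (rule E_le[OF assms(1) assms(7)[OF a]])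
    also have "\<dots> = d (t *\<^sub>R (y - a)) 0"
      by (rule d_shift[OF assms(2), where q="t *\<^sub>R a"]; simp add: algebra_simps)
    also have "\<dots> \<le> real m * d (y - a) 0" by (rule d_scale[OF assms(1-5)])
    also have "d (y - a) 0 = d y a"
      by (rule d_shift[OF assms(2), where q="-a"]; simp)
    finally show "best_approx_error d (t *\<^sub>R y) B / real m \<le> d y a"
      using False by (simp add: divide_simps mult.commute)
  qed
  then show ?thesis using False by (simp add: divide_simps mult.commute)
qed


theorem mainTheorem4:
  fixes d :: "'a::real_vector \<Rightarrow> 'a \<Rightarrow> real"
    and A :: "nat \<Rightarrow> 'a set"
    and N0 :: "nat set"
    and x :: "nat \<Rightarrow> 'a"
    and c :: real
  assumes "F_space d"
    and "nondecreasing_metric d"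
    and "approximation_scheme d A"
    and "infinite N0"
    and "tvs_bounded d (x ` N0)"
    and "c > 0"
    and "\<forall>n\<in>N0. c \<le> best_approx_error d (x n) (A n)"
  shows "satisfies_Shapiro d A"
proof -
  have met: "is_metric d" using assms(1) by (simp add: F_space_def)
  have ti: "\<forall>x y z. d (x + z) (y + z) = d x y" using assms(1) by (simp add: F_space_def)
  have compl: "\<And>s. d_Cauchy d s \<Longrightarrow> \<exists>l. d_converges d s l" using assms(1) by (simp add: F_space_def)
  have strict: "\<And>n. A n \<subset> A (Suc n)" using assms(3) by (simp add: approximation_scheme_def)
  have scal: "\<And>n t a. a \<in> A n \<Longrightarrow> t *\<^sub>R a \<in> A n" using assms(3) by (simp add: approximation_scheme_def)
  have "\<exists>K::nat \<Rightarrow> nat. \<forall>n. K n \<ge> n \<and> {a + b | a b. a \<in> A n \<and> b \<in> A n} \<subseteq> A (K n)"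
    using assms(3) unfolding approximation_scheme_def by (elim conjE)
  then obtain K :: "nat \<Rightarrow> nat" where K0: "\<forall>n. K n \<ge> n \<and> {a + b | a b. a \<in> A n \<and> b \<in> A n} \<subseteq> A (K n)"
    by (elim exE)
  have K: "\<And>n. K n \<ge> n" "\<And>n a b. a \<in> A n \<Longrightarrow> b \<in> A n \<Longrightarrow> a + b \<in> A (K n)"
  proof -
    show "\<And>n. K n \<ge> n" using K0 by simp
    fix n a b assume "a \<in> A n" "b \<in> A n"
    then have "a + b \<in> {a + b | a b. a \<in> A n \<and> b \<in> A n}" by blast
    then show "a + b \<in> A (K n)" using K0 by (meson subsetD)
  qed
  have monoA: "\<And>m n. m \<le> n \<Longrightarrow> A m \<subseteq> A n"
  proof -
    have step: "\<And>n. A n \<subseteq> A (Suc n)" using strict by (simp add: less_imp_le)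
    fix m n :: nat assume "m \<le> n"
    then show "A m \<subseteq> A n" by (rule lift_Suc_mono_le[of A, OF step])
  qed
  have ne: "\<And>n. n \<ge> 1 \<Longrightarrow> A n \<noteq> {}"
  proof -
    fix n :: nat assume "n \<ge> 1"
    have "A 1 \<noteq> {}" using strict[of 0] by auto
    then show "A n \<noteq> {}" using monoA[OF \<open>n \<ge> 1\<close>] by auto
  qed
  have negA: "\<And>n a. a \<in> A n \<Longrightarrow> - a \<in> A n" using scal[of _ _ "-1"] by simp
  interpret M: Metric_space UNIV d
    using met unfolding is_metric_def by unfold_locales blast+
  have mcomp: M.mcomplete
    unfolding M.mcomplete_def
  proof (intro allI impI)
    fix s assume "M.MCauchy s"
    then have "d_Cauchy d s" unfolding M.MCauchy_def d_Cauchy_def by (meson order.refl)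
    then obtain l where "d_converges d s l" using compl by blast
    then have "limitin M.mtopology s l sequentially"
      unfolding M.limitin_metric_dist_null d_converges_def by simp
    then show "\<exists>l. limitin M.mtopology s l sequentially" by (rule exI)
  qed
  show ?thesis
    unfolding satisfies_Shapiro_def
  proof (intro allI impI)
    fix \<epsilon> :: "nat \<Rightarrow> real"
    assume dec: "decseq \<epsilon>" and epos: "\<forall>n. 0 \<le> \<epsilon> n" and elim: "\<epsilon> \<longlonglongrightarrow> 0"
    let ?E = "\<lambda>y n. best_approx_error d y (A n)"
    show "\<exists>y. (\<lambda>n. ?E y n) \<notin> O(\<epsilon>)"
    proof (rule ccontr)
      assume "\<not> ?thesis"
      then have allO: "\<And>y. (\<lambda>n. ?E y n) \<in> O(\<epsilon>)" by blast
      define S where "S = (\<lambda>(C::nat, N::nat). {y. \<forall>n. Suc N \<le> n \<longrightarrow> ?E y n \<le> real C * \<epsilon> n})"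
      define G where "G = S ` UNIV"
      have cover: "\<Union>G = UNIV"
      proof (safe)
        fix y :: 'a
        obtain C0 where C0: "C0 > 0" "eventually (\<lambda>n. norm (?E y n) \<le> C0 * norm (\<epsilon> n)) sequentially"
          using allO[of y] by (auto elim: landau_o.bigE)
        then obtain N where N: "\<And>n. n \<ge> N \<Longrightarrow> norm (?E y n) \<le> C0 * norm (\<epsilon> n)"
          unfolding eventually_sequentially by blast
        have "y \<in> S (nat \<lceil>C0\<rceil>, N)"
          unfolding S_def
        proof (clarsimp)
          fix n assume "Suc N \<le> n"
          have "?E y n \<le> norm (?E y n)" by simp
          also have "\<dots> \<le> C0 * \<epsilon> n" using N[of n] \<open>Suc N \<le> n\<close> epos by simp
          also have "\<dots> \<le> real (nat \<lceil>C0\<rceil>) * \<epsilon> n"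
            using epos by (intro mult_right_mono) (auto simp: real_nat_ceiling_ge)
          finally show "?E y n \<le> real (nat \<lceil>C0\<rceil>) * \<epsilon> n" .
        qed
        then show "y \<in> \<Union>G" unfolding G_def by blast
      qed auto
      have closedS: "closedin M.mtopology (S p)" for p
      proof -
        obtain C N where p: "p = (C, N)" by fastforce
        show ?thesis
          unfolding M.closedin_metric p
        proof (intro conjI allI impI)
          fix y assume "y \<in> UNIV - S (C, N)"
          then obtain n where n: "Suc N \<le> n" "?E y n > real C * \<epsilon> n"
            unfolding S_def by (auto simp: not_le)
          have nne: "A n \<noteq> {}" using ne n(1) by simp
          show "\<exists>r>0. disjnt (S (C, N)) (M.mball y r)"
          proof (intro exI conjI)
            show "?E y n - real C * \<epsilon> n > 0" using n by simp
            show "disjnt (S (C, N)) (M.mball y (?E y n - real C * \<epsilon> n))"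
              unfolding disjnt_def
            proof (safe)
              fix z assume z: "z \<in> S (C, N)" "z \<in> M.mball y (?E y n - real C * \<epsilon> n)"
              have "?E y n \<le> d y z + ?E z n" by (rule E_lip[OF met nne])
              moreover have "d y z < ?E y n - real C * \<epsilon> n" using z(2) by (simp add: M.mball_def)
              moreover have "?E z n \<le> real C * \<epsilon> n" using z(1) n(1) unfolding S_def by simp
              ultimately show "z \<in> {}" by simp
            qed
          qed
        qed simp
      qed
      have "M.mtopology interior_of \<Union>G \<noteq> {}"
        using cover interior_of_topspace[of M.mtopology] by (simp add: M.topspace_mtopology)
      note ne_int = this
      have ctbl: "countable G" unfolding G_def by simp
      have "\<exists>T\<in>G. M.mtopology interior_of T \<noteq> {}"
      proof (rule ccontr)
        assume "\<not> ?thesis"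
        then have "\<And>T. T\<in>G \<Longrightarrow> closedin M.mtopology T \<and> M.mtopology interior_of T = {}"
          using closedS unfolding G_def by blast
        then have "M.mtopology interior_of \<Union>G = {}" by (rule M.metric_Baire_category_alt[OF mcomp ctbl])
        with ne_int show False by simp
      qed
      then obtain T where T: "T \<in> G" "M.mtopology interior_of T \<noteq> {}" by blast
      then obtain C N where TS: "T = S (C, N)" unfolding G_def by auto
      obtain x0 where x0: "x0 \<in> M.mtopology interior_of T" using T(2) by blast
      obtain r where r: "r > 0" "M.mball x0 r \<subseteq> M.mtopology interior_of T"
        using x0 M.openin_mtopology[of "M.mtopology interior_of T"] by (meson openin_interior_of)
      have ballS: "\<And>z. d x0 z < r \<Longrightarrow> z \<in> S (C, N)"
        using r(2) interior_of_subset[of M.mtopology T] TS by (auto simp: M.mball_def)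
      have keyB: "?E y (K n) \<le> 2 * real C * \<epsilon> n" if "d y 0 < r" "Suc N \<le> n" for y n
      proof -
        have nne: "A n \<noteq> {}" using ne that(2) by simp
        have "d x0 (y + x0) = d 0 y" by (rule d_shift[OF ti, where q=x0]; simp)
        also have "\<dots> = d y 0" by (rule md_sym[OF met])
        finally have "y + x0 \<in> S (C, N)" using ballS that(1) by simp
        then have a: "?E (y + x0) n \<le> real C * \<epsilon> n" using that(2) unfolding S_def by simp
        have "x0 \<in> S (C, N)" using ballS r(1) md_zero[OF met] by simp
        then have b: "?E x0 n \<le> real C * \<epsilon> n" using that(2) unfolding S_def by simp
        have "?E y (K n) = ?E ((y + x0) + (- x0)) (K n)" by simp
        also have "\<dots> \<le> ?E (y + x0) n + ?E (- x0) n"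
          by (rule E_add[OF met ti nne K(2)])
        also have "?E (- x0) n \<le> ?E x0 n" by (rule E_neg[OF met ti nne negA])
        finally show ?thesis using a b by simp
      qed
      obtain t where t: "t > 0" "x ` N0 \<subseteq> (\<lambda>y. t *\<^sub>R y) ` d_ball0 d (r/2)"
        using assms(5) r(1) unfolding tvs_bounded_def by (meson half_gt_zero)
      define m where "m = nat \<lceil>t\<rceil>"
      have tm: "t \<le> real m" unfolding m_def by (simp add: real_nat_ceiling_ge)
      have keyX: "?E (x k) (K n) \<le> real m * (2 * real C * \<epsilon> n)" if "k \<in> N0" "Suc N \<le> n" for k n
      proof -
        have "x k \<in> x ` N0" using that(1) by (rule imageI)
        then have "x k \<in> (\<lambda>y. t *\<^sub>R y) ` d_ball0 d (r/2)" using t(2) by (rule subsetD[rotated])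
        then obtain y where y0: "y \<in> d_ball0 d (r/2)" "x k = t *\<^sub>R y" by (rule imageE) simp
        have y: "d y 0 \<le> r/2" "x k = t *\<^sub>R y" using y0 unfolding d_ball0_def by simp_all
        have Kne: "A (K n) \<noteq> {}" by (rule ne) (use K(1)[of n] that(2) in linarith)
        have "?E (x k) (K n) \<le> real m * ?E y (K n)" unfolding y(2)
          by (rule E_scale[OF met ti assms(2) _ tm Kne scal]) (use t(1) in simp)
        also have "\<dots> \<le> real m * (2 * real C * \<epsilon> n)"
        proof (rule mult_left_mono[OF keyB])
          show "d y 0 < r" using y(1) r(1) by linarith
          show "Suc N \<le> n" using that(2) .
          show "0 \<le> real m" by simp
        qed
        finally show ?thesis .
      qed
      have "(\<lambda>n. (real m * (2 * real C)) * \<epsilon> n) \<longlonglongrightarrow> (real m * (2 * real C)) * 0"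
        by (intro tendsto_mult tendsto_const elim)
      then have "eventually (\<lambda>n. (real m * (2 * real C)) * \<epsilon> n < c) sequentially"
        using assms(6) by (simp add: order_tendstoD)
      then obtain n1 where n1: "\<And>n. n \<ge> n1 \<Longrightarrow> (real m * (2 * real C)) * \<epsilon> n < c"
        unfolding eventually_sequentially by blast
      define n where "n = max n1 (Suc N)"
      obtain k where k: "k \<in> N0" "K n \<le> k"
        using assms(4) by (meson infinite_nat_iff_unbounded_le)
      have Kne: "A (K n) \<noteq> {}" using ne K(1)[of n] unfolding n_def by simp
      have "c \<le> ?E (x k) k" using assms(7) k(1) by blast
      also have "\<dots> \<le> ?E (x k) (K n)" by (rule E_mono[OF met Kne monoA[OF k(2)]])
      also have "\<dots> \<le> real m * (2 * real C * \<epsilon> n)" by (rule keyX[OF k(1)]) (simp add: n_def)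
      also have "\<dots> < c" using n1[of n] unfolding n_def by (simp add: mult.assoc)
      finally show False by simp
    qed
  qed
qed

end
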